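(* Let $\pi$ be an adaptive batching policy and let $\mathfrak{t}^\pi_i$ be the (random) step at which $\pi$ starts its $i$-th batch (with $\mathfrak{t}^\pi_i=H+1$ if there are fewer than $i$ batches, in which case the corresponding term below is $0$). Define $$\mathrm{Var}^\pi_h(s)=\mathbb{E}\left[\left(\sum_{t=h}^{h+B_h-1}R_t+V^\pi_{h+B_h}(s_{h+B_h})-V^\pi_h(s)\right)^2\,\Big|\,\pi,s_h=s,E^n_h\right],$$ where $B_h=B^\pi_h(s)$. Then $$\mathbb{E}\left[\sum_{i=1}^H\mathrm{Var}^\pi_{\mathfrak{t}^\pi_i}(s_{\mathfrak{t}^\pi_i})\,\Big|\,\pi,s_1=s\right]=\mathbb{E}\left[\left(\sum_{t=1}^HR_t-V^\pi_1(s_1)\right)^2\,\Big|\,\pi,s_1=s\right]\le H^2.$$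
   Context: Episodic tabular MDP with horizon $H$, rewards $R_t\in[0,1]$, transitions independent across time steps. Fix $\ell\ge1$, $\ell_h=\min\{\ell,H-h+1\}$. $B$-step lookahead information from $s$ at step $h$ consists of the realized rewards and next states of all state-action pairs reachable from $s$ at steps $h,\dots,h+B-1$. An adaptive batching policy (ABP) $\pi$: the first batch starts at step $1$; at the start of a batch at step $h$ in state $s_h$ it picks $B_h=B^\pi_h(s_h)\in\{1,\dots,\ell_h\}$, observes fresh $B_h$-step lookahead information from $s_h$ (sampled independently of the past), plays a deterministic Markov policy depending on $(h,s_h,\text{lookahead})$ for $B_h$ steps, and the next batch starts at step $h+B_h$. $E^n_h$ is the event that a batch starts at step $h$, and $V^\pi_h(s)=\mathbb{E}[\sum_{t=h}^HR_t\mid s_h=s,E^n_h,\pi]$, $V^\pi_{H+1}\equiv0$. *)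

theory Defs
  imports "HOL-Probability.Probability"
begin

text \<open>The randomness of time step t is a random
  variable W t, mapping every state-action pair (x,a) to its realized reward and next state
  at step t: W t w (x,a) = (R, x'). The W t, t in {1..H}, are independent (transitions
  independent across time steps). Lookahead information for a batch of length B started at
  step h consists of the realizations at steps h, ..., h+B-1 (index i stands for step h+i).\<close>

type_synonym ('s,'a) realization = "'s \<times> 'a \<Rightarrow> real \<times> 's"

definition real_space :: "('s,'a) realization measure" where
  "real_space = Pi\<^sub>M UNIV (\<lambda>_. borel \<Otimes>\<^sub>M count_space UNIV)"

definition info_space :: "(nat \<Rightarrow> ('s,'a) realization) measure" where
  "info_space = Pi\<^sub>M UNIV (\<lambda>_. real_space)"

definition info :: "(nat \<Rightarrow> 'w \<Rightarrow> ('s,'a) realization) \<Rightarrow> nat \<Rightarrow> nat \<Rightarrow> 'w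
    \<Rightarrow> nat \<Rightarrow> ('s,'a) realization" where
  "info W h B w = (\<lambda>i. if i < B then W (h + i) w else (\<lambda>_. undefined))"

fun reach :: "'w measure \<Rightarrow> (nat \<Rightarrow> 'w \<Rightarrow> ('s,'a) realization) \<Rightarrow> nat \<Rightarrow> 's \<Rightarrow> nat
    \<Rightarrow> 's set" where
  "reach M W h s 0 = {s}"
| "reach M W h s (Suc i) = {y. \<exists>x\<in>reach M W h s i. \<exists>a.
      measure M {w \<in> space M. snd (W (h + i) w (x, a)) = y} > 0}"

text \<open>An adaptive batching policy is a pair (Bf, act): Bf h s is the batch length chosen at
  a batch start at step h in state s; act h s L t x is the action played at step t in state x
  during the batch started at step h in state s, after observing lookahead information L.\<close>
definition ABP :: "'w measure \<Rightarrow> (nat \<Rightarrow> 'w \<Rightarrow> ('s,'a) realization) \<Rightarrow> nat \<Rightarrow> nat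
    \<Rightarrow> (nat \<Rightarrow> 's \<Rightarrow> nat)
    \<Rightarrow> (nat \<Rightarrow> 's \<Rightarrow> (nat \<Rightarrow> ('s,'a) realization) \<Rightarrow> nat \<Rightarrow> 's \<Rightarrow> 'a) \<Rightarrow> bool" where
  "ABP M W H l Bf act \<longleftrightarrow>
     (\<forall>h\<in>{1..H}. \<forall>s. 1 \<le> Bf h s \<and> Bf h s \<le> min l (H - h + 1)) \<and>
     (\<forall>h\<in>{1..H}. \<forall>s L L'.
        (\<forall>i < Bf h s. \<forall>x\<in>reach M W h s i. \<forall>a. L i (x, a) = L' i (x, a))
        \<longrightarrow> act h s L = act h s L') \<and>
     (\<forall>h s t x. (\<lambda>L. act h s L t x) \<in> measurable info_space (count_space UNIV))"

text \<open>Trajectory of the policy started with a batch at step h0 in state s0; entry k gives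
  (state at step h0+k, start step of current batch, state at that batch start).\<close>
fun traj :: "(nat \<Rightarrow> 's \<Rightarrow> nat)
    \<Rightarrow> (nat \<Rightarrow> 's \<Rightarrow> (nat \<Rightarrow> ('s,'a) realization) \<Rightarrow> nat \<Rightarrow> 's \<Rightarrow> 'a)
    \<Rightarrow> (nat \<Rightarrow> 'w \<Rightarrow> ('s,'a) realization) \<Rightarrow> nat \<Rightarrow> 's \<Rightarrow> 'w \<Rightarrow> nat \<Rightarrow> 's \<times> nat \<times> 's" where
  "traj Bf act W h0 s0 w 0 = (s0, h0, s0)"
| "traj Bf act W h0 s0 w (Suc k) =
     (let (x, b, sb) = traj Bf act W h0 s0 w k;
          t = h0 + k;
          a = act b sb (info W b (Bf b sb) w) t x;
          x' = snd (W t w (x, a))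
      in if Suc t = b + Bf b sb then (x', Suc t, x') else (x', b, sb))"

definition state_at where
  "state_at Bf act W h0 s0 w t = fst (traj Bf act W h0 s0 w (t - h0))"

definition action_at where
  "action_at Bf act W h0 s0 w t =
     (case traj Bf act W h0 s0 w (t - h0) of (x, b, sb) \<Rightarrow> act b sb (info W b (Bf b sb) w) t x)"

definition reward_at where
  "reward_at Bf act W h0 s0 w t =
     fst (W t w (state_at Bf act W h0 s0 w t, action_at Bf act W h0 s0 w t))"

text \<open>Value function V^pi_h(s) (a batch starts at step h in state s); V_{H+1} = 0.\<close>
definition Val where
  "Val M W H Bf act h s = (\<integral>w. (\<Sum>t=h..H. reward_at Bf act W h s w t) \<partial>M)"

definition BVar where
  "BVar M W H Bf act h s =
     (let B = Bf h s in
      (\<integral>w. ((\<Sum>t=h..h+B-1. reward_at Bf act W h s w t)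
              + Val M W H Bf act (h + B) (state_at Bf act W h s w (h + B))
              - Val M W H Bf act h s)\<^sup>2 \<partial>M))"

text \<open>Start step of the i-th batch (i \<ge> 1) for the run started at step 1 in state s;
  equals H+1 if there are fewer than i batches.\<close>
fun tb where
  "tb H Bf act W s w 0 = 0"
| "tb H Bf act W s w (Suc 0) = 1"
| "tb H Bf act W s w (Suc (Suc i)) =
     (let t = tb H Bf act W s w (Suc i) in
      if t \<le> H then t + Bf t (state_at Bf act W 1 s w t) else H + 1)"

end

theory Submission imports Defs begin

lemma traj_stay:
  assumes "1 \<le> Bf h0 s0" "k < Bf h0 s0"
  shows "\<exists>x. traj Bf act W h0 s0 w k = (x, h0, s0)"
  using assms(2)
proof (induction k)
  case 0 then show ?case by simp
next
  case (Suc k)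
  then obtain x where "traj Bf act W h0 s0 w k = (x, h0, s0)" by auto
  with Suc.prems show ?case by (simp add: Let_def)
qed

lemma traj_end:
  assumes "1 \<le> Bf h0 s0"
  shows "\<exists>x. traj Bf act W h0 s0 w (Bf h0 s0) = (x, h0 + Bf h0 s0, x)"
proof -
  obtain k where k: "Bf h0 s0 = Suc k" using assms by (cases "Bf h0 s0") auto
  then obtain x where "traj Bf act W h0 s0 w k = (x, h0, s0)" using traj_stay[of Bf h0 s0 k act W w] assms k by auto
  then show ?thesis using k by (simp add: Let_def)
qed

lemma traj_shift:
  assumes "traj Bf act W h0 s0 w k = (y, h0 + k, y)"
  shows "traj Bf act W h0 s0 w (k + j) = traj Bf act W (h0 + k) y w j"
proof (induction j)
  case 0 then show ?case using assms by simp
next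
  case (Suc j)
  have "traj Bf act W h0 s0 w (k + Suc j) = traj Bf act W h0 s0 w (Suc (k + j))" by simp
  also have "\<dots> = traj Bf act W (h0 + k) y w (Suc j)"
    by (simp only: traj.simps Suc.IH add.assoc)
  finally show ?case .
qed

lemma traj_inv:
  assumes Bfb: "\<forall>h\<in>{1..H}. \<forall>s. 1 \<le> Bf h s \<and> Bf h s \<le> H - h + 1"
    and "1 \<le> h0" "h0 + k \<le> H" "traj Bf act W h0 s0 w k = (x, b, sb)"
  shows "h0 \<le> b \<and> b \<le> h0 + k \<and> h0 + k < b + Bf b sb \<and> b + Bf b sb \<le> H + 1"
  using assms(3,4)
proof (induction k arbitrary: x b sb)
  case 0
  then have "1 \<le> Bf h0 s0 \<and> Bf h0 s0 \<le> H - h0 + 1" using Bfb assms(2) by auto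
  then show ?case using 0 by auto
next
  case (Suc k)
  obtain x0 b0 sb0 where t0: "traj Bf act W h0 s0 w k = (x0, b0, sb0)" by (cases "traj Bf act W h0 s0 w k") auto
  have IH: "h0 \<le> b0 \<and> b0 \<le> h0 + k \<and> h0 + k < b0 + Bf b0 sb0 \<and> b0 + Bf b0 sb0 \<le> H + 1"
    using Suc.IH[OF _ t0] Suc.prems by auto
  show ?case
  proof (cases "Suc (h0 + k) = b0 + Bf b0 sb0")
    case True
    then have e: "b = Suc (h0 + k) \<and> sb = x" using Suc.prems(2) t0 by (auto simp add: Let_def)
    have "1 \<le> Bf b sb \<and> Bf b sb \<le> H - b + 1" using Bfb e Suc.prems(1) assms(2) by auto
    then show ?thesis using e Suc.prems(1) by auto
  next
    case False
    then have e: "b = b0 \<and> sb = sb0" using Suc.prems(2) t0 by (simp add: Let_def)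
    then show ?thesis using IH False by auto
  qed
qed

lemma traj_cong:
  assumes "\<And>k'. k' < K \<Longrightarrow> (case traj Bf act W h0 s0 w k' of (x, b, sb) \<Rightarrow>
      (\<forall>i<Bf b sb. W (b + i) w = W' (b + i) w') \<and> W (h0 + k') w = W' (h0 + k') w')"
  shows "traj Bf act W h0 s0 w K = traj Bf act W' h0 s0 w' K"
  using assms
proof (induction K)
  case 0 then show ?case by simp
next
  case (Suc K)
  have e: "traj Bf act W h0 s0 w K = traj Bf act W' h0 s0 w' K" using Suc by auto
  obtain x b sb where t: "traj Bf act W h0 s0 w K = (x, b, sb)" by (cases "traj Bf act W h0 s0 w K") auto
  have c: "(\<forall>i<Bf b sb. W (b + i) w = W' (b + i) w') \<and> W (h0 + K) w = W' (h0 + K) w'"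
    using Suc.prems[of K] t by auto
  have "info W b (Bf b sb) w = info W' b (Bf b sb) w'" using c unfolding info_def by auto
  moreover have t': "traj Bf act W' h0 s0 w' K = (x, b, sb)" using e t by simp
  ultimately show ?case using t c by (simp add: Let_def)
qed

lemma reward_cong:
  assumes "\<And>k'. k' \<le> t - h0 \<Longrightarrow> (case traj Bf act W h0 s0 w k' of (x, b, sb) \<Rightarrow>
      (\<forall>i<Bf b sb. W (b + i) w = W' (b + i) w') \<and> W (h0 + k') w = W' (h0 + k') w')"
    and "h0 \<le> t"
  shows "reward_at Bf act W h0 s0 w t = reward_at Bf act W' h0 s0 w' t"
proof -
  have e: "traj Bf act W h0 s0 w (t - h0) = traj Bf act W' h0 s0 w' (t - h0)"
    by (rule traj_cong) (use assms(1) in auto)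
  obtain x b sb where tr: "traj Bf act W h0 s0 w (t - h0) = (x, b, sb)" by (cases "traj Bf act W h0 s0 w (t - h0)") auto
  have c: "(\<forall>i<Bf b sb. W (b + i) w = W' (b + i) w') \<and> W t w = W' t w'"
    using assms(1)[of "t - h0"] tr assms(2) by auto
  have "info W b (Bf b sb) w = info W' b (Bf b sb) w'" using c unfolding info_def by auto
  moreover have t': "traj Bf act W' h0 s0 w' (t - h0) = (x, b, sb)" using e tr by simp
  ultimately show ?thesis using tr c unfolding reward_at_def state_at_def action_at_def by simp
qed

definition Wc :: "nat \<Rightarrow> (nat \<Rightarrow> ('s,'a) realization) \<Rightarrow> ('s,'a) realization" where
  "Wc t \<omega> = \<omega> t"

lemma space_real_space: "space real_space = UNIV"
  unfolding real_space_def by (auto simp: space_PiM space_pair_measure)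

lemma space_info_space: "space info_space = UNIV"
  unfolding info_space_def by (auto simp: space_PiM space_real_space)

lemma meas_comp: "(\<lambda>\<omega>. \<omega> j) \<in> measurable (PiM J (\<lambda>_. real_space)) real_space"
proof (cases "j \<in> J")
  case True then show ?thesis by (rule measurable_component_singleton)
next
  case False
  have "(\<lambda>\<omega>. undefined) \<in> measurable (PiM J (\<lambda>_. real_space)) real_space"
    by (simp add: space_real_space)
  then show ?thesis
    by (rule measurable_cong[THEN iffD1, rotated]) (use False in \<open>auto simp: space_PiM PiE_def extensional_def\<close>)
qed

lemma meas_eval: "(\<lambda>r. r p) \<in> measurable real_space (borel \<Otimes>\<^sub>M count_space UNIV)"
  unfolding real_space_def by (rule measurable_component_singleton) simp

lemma meas_info: "(\<lambda>\<omega>. info Wc b B \<omega>) \<in> measurable (PiM J (\<lambda>_. real_space)) info_space"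
  unfolding info_space_def info_def Wc_def
proof (rule measurable_PiM_single')
  fix i
  show "(\<lambda>\<omega>. if i < B then \<omega> (b + i) else (\<lambda>_. undefined)) \<in> measurable (PiM J (\<lambda>_. real_space)) real_space"
    by (cases "i < B") (auto simp: meas_comp space_real_space)
qed (auto simp: space_real_space)

lemma meas_snd_eval: "(\<lambda>\<omega>. snd (\<omega> t (x, a))) \<in> measurable (PiM J (\<lambda>_. real_space)) (count_space UNIV)"
proof -
  have "(\<lambda>\<omega>. (\<omega> t) (x, a)) \<in> measurable (PiM J (\<lambda>_. real_space)) (borel \<Otimes>\<^sub>M count_space UNIV)"
    using measurable_compose[OF meas_comp meas_eval] .
  then show ?thesis by measurable
qed

lemma meas_fst_eval: "(\<lambda>\<omega>. fst (\<omega> t (x, a))) \<in> borel_measurable (PiM J (\<lambda>_. real_space))"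
proof -
  have "(\<lambda>\<omega>. (\<omega> t) (x, a)) \<in> measurable (PiM J (\<lambda>_. real_space)) (borel \<Otimes>\<^sub>M count_space UNIV)"
    using measurable_compose[OF meas_comp meas_eval] .
  then show ?thesis by measurable
qed

lemma meas_count_fun:
  fixes g :: "_ \<Rightarrow> 'c::countable"
  assumes "g \<in> measurable N (count_space UNIV)"
  shows "(\<lambda>x. f (g x)) \<in> measurable N (count_space UNIV)"
  using measurable_compose[OF assms measurable_count_space] .

lemma meas_act:
  fixes act :: "nat \<Rightarrow> 's \<Rightarrow> (nat \<Rightarrow> ('s,'a) realization) \<Rightarrow> nat \<Rightarrow> 's \<Rightarrow> 'a"
  assumes "\<forall>h s t x. (\<lambda>L. act h s L t x) \<in> measurable info_space (count_space UNIV)"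
  shows "(\<lambda>\<omega>. act b sb (info Wc b B \<omega>) t x) \<in> measurable (PiM J (\<lambda>_. real_space)) (count_space UNIV)"
  using measurable_compose[OF meas_info assms[rule_format]] .

lemma meas_traj:
  fixes act :: "nat \<Rightarrow> 's::finite \<Rightarrow> (nat \<Rightarrow> ('s,'a::finite) realization) \<Rightarrow> nat \<Rightarrow> 's \<Rightarrow> 'a"
  assumes A: "\<forall>h s t x. (\<lambda>L. act h s L t x) \<in> measurable info_space (count_space UNIV)"
  shows "(\<lambda>\<omega>. traj Bf act Wc h0 s0 \<omega> k) \<in> measurable (PiM J (\<lambda>_. real_space)) (count_space UNIV)"
proof (induction k)
  case 0 then show ?case by simp
next
  case (Suc k)
  define F where "F = (\<lambda>(p::'s \<times> nat \<times> 's) \<omega>. (case p of (x, b, sb) \<Rightarrow> let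
          t = h0 + k;
          a = act b sb (info Wc b (Bf b sb) \<omega>) t x;
          x' = snd (Wc t \<omega> (x, a))
      in if Suc t = b + Bf b sb then (x', Suc t, x') else (x', b, sb)))"
  have "traj Bf act Wc h0 s0 \<omega> (Suc k) = F (traj Bf act Wc h0 s0 \<omega> k) \<omega>" for \<omega>
    unfolding F_def by (simp add: split_beta)
  moreover have "(\<lambda>\<omega>. F (traj Bf act Wc h0 s0 \<omega> k) \<omega>) \<in> measurable (PiM J (\<lambda>_. real_space)) (count_space UNIV)"
  proof (rule measurable_compose_countable[OF _ Suc.IH])
    fix p :: "'s \<times> nat \<times> 's"
    obtain x b sb where p: "p = (x, b, sb)" by (cases p) auto
    define G where "G = (\<lambda>(a::'a) (\<omega>::nat \<Rightarrow> ('s,'a) realization). snd (\<omega> (h0 + k) (x, a)))"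
    have "(\<lambda>\<omega>. G (act b sb (info Wc b (Bf b sb) \<omega>) (h0 + k) x) \<omega>) \<in> measurable (PiM J (\<lambda>_. real_space)) (count_space UNIV)"
      by (rule measurable_compose_countable[OF _ meas_act[OF A]]) (simp add: G_def meas_snd_eval)
    then have "(\<lambda>\<omega>. (\<lambda>x'. if Suc (h0 + k) = b + Bf b sb then (x', Suc (h0 + k), x') else (x', b, sb))
        (G (act b sb (info Wc b (Bf b sb) \<omega>) (h0 + k) x) \<omega>)) \<in> measurable (PiM J (\<lambda>_. real_space)) (count_space UNIV)"
      by (rule meas_count_fun)
    then show "(\<lambda>\<omega>. F p \<omega>) \<in> measurable (PiM J (\<lambda>_. real_space)) (count_space UNIV)"
      unfolding F_def G_def p by (simp add: Wc_def Let_def)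
  qed
  ultimately show ?case by simp
qed

lemma meas_state:
  fixes act :: "nat \<Rightarrow> 's::finite \<Rightarrow> (nat \<Rightarrow> ('s,'a::finite) realization) \<Rightarrow> nat \<Rightarrow> 's \<Rightarrow> 'a"
  assumes A: "\<forall>h s t x. (\<lambda>L. act h s L t x) \<in> measurable info_space (count_space UNIV)"
  shows "(\<lambda>\<omega>. state_at Bf act Wc h0 s0 \<omega> t) \<in> measurable (PiM J (\<lambda>_. real_space)) (count_space UNIV)"
  unfolding state_at_def by (rule meas_count_fun[OF meas_traj[OF A]])

lemma meas_reward:
  fixes act :: "nat \<Rightarrow> 's::finite \<Rightarrow> (nat \<Rightarrow> ('s,'a::finite) realization) \<Rightarrow> nat \<Rightarrow> 's \<Rightarrow> 'a"
  assumes A: "\<forall>h s t x. (\<lambda>L. act h s L t x) \<in> measurable info_space (count_space UNIV)"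
  shows "(\<lambda>\<omega>. reward_at Bf act Wc h0 s0 \<omega> t) \<in> borel_measurable (PiM J (\<lambda>_. real_space))"
proof -
  define F where "F = (\<lambda>(p::'s \<times> nat \<times> 's) (\<omega>::nat \<Rightarrow> ('s,'a) realization). case p of (x, b, sb) \<Rightarrow>
     fst (\<omega> t (x, act b sb (info Wc b (Bf b sb) \<omega>) t x)))"
  have e: "reward_at Bf act Wc h0 s0 \<omega> t = F (traj Bf act Wc h0 s0 \<omega> (t - h0)) \<omega>" for \<omega>
    unfolding F_def reward_at_def state_at_def action_at_def Wc_def by (simp add: split_beta)
  have "(\<lambda>\<omega>. F (traj Bf act Wc h0 s0 \<omega> (t - h0)) \<omega>) \<in> borel_measurable (PiM J (\<lambda>_. real_space))"
  proof (rule measurable_compose_countable[OF _ meas_traj[OF A]])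
    fix p :: "'s \<times> nat \<times> 's"
    obtain x b sb where p: "p = (x, b, sb)" by (cases p) auto
    define G where "G = (\<lambda>(a::'a) (\<omega>::nat \<Rightarrow> ('s,'a) realization). fst (\<omega> t (x, a)))"
    have "(\<lambda>\<omega>. G (act b sb (info Wc b (Bf b sb) \<omega>) t x) \<omega>) \<in> borel_measurable (PiM J (\<lambda>_. real_space))"
      by (rule measurable_compose_countable[OF _ meas_act[OF A]]) (simp add: G_def meas_fst_eval)
    then show "(\<lambda>\<omega>. F p \<omega>) \<in> borel_measurable (PiM J (\<lambda>_. real_space))"
      unfolding F_def G_def p by simp
  qed
  then show ?thesis unfolding e .
qed

lemma reward_shift:
  assumes "traj Bf act W h0 s0 w k = (y, h0 + k, y)" "h0 + k \<le> t"
  shows "reward_at Bf act W h0 s0 w t = reward_at Bf act W (h0 + k) y w t"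
proof -
  have "t - h0 = k + (t - (h0 + k))" using assms(2) by simp
  then have "traj Bf act W h0 s0 w (t - h0) = traj Bf act W (h0 + k) y w (t - (h0 + k))"
    using traj_shift[OF assms(1)] by simp
  then show ?thesis unfolding reward_at_def state_at_def action_at_def by simp
qed

lemma state_shift:
  assumes "traj Bf act W h0 s0 w k = (y, h0 + k, y)" "h0 + k \<le> t"
  shows "state_at Bf act W h0 s0 w t = state_at Bf act W (h0 + k) y w t"
proof -
  have "t - h0 = k + (t - (h0 + k))" using assms(2) by simp
  then have "traj Bf act W h0 s0 w (t - h0) = traj Bf act W (h0 + k) y w (t - (h0 + k))"
    using traj_shift[OF assms(1)] by simp
  then show ?thesis unfolding state_at_def by simp
qed

lemma traj_end_state:
  assumes "1 \<le> Bf h0 s0"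
  shows "traj Bf act W h0 s0 w (Bf h0 s0) = (state_at Bf act W h0 s0 w (h0 + Bf h0 s0), h0 + Bf h0 s0,
     state_at Bf act W h0 s0 w (h0 + Bf h0 s0))"
  using traj_end[of Bf h0 s0 act W w] assms unfolding state_at_def by auto

fun bsum :: "'w measure \<Rightarrow> (nat \<Rightarrow> 'w \<Rightarrow> ('s,'a) realization) \<Rightarrow> nat \<Rightarrow> (nat \<Rightarrow> 's \<Rightarrow> nat)
    \<Rightarrow> (nat \<Rightarrow> 's \<Rightarrow> (nat \<Rightarrow> ('s,'a) realization) \<Rightarrow> nat \<Rightarrow> 's \<Rightarrow> 'a)
    \<Rightarrow> (nat \<Rightarrow> 'v \<Rightarrow> ('s,'a) realization) \<Rightarrow> nat \<Rightarrow> nat \<Rightarrow> 's \<Rightarrow> 'v \<Rightarrow> real" where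
  "bsum M W H Bf act Wx 0 h x v = 0"
| "bsum M W H Bf act Wx (Suc n) h x v = (if h \<le> H then BVar M W H Bf act h x +
     bsum M W H Bf act Wx n (h + Bf h x) (state_at Bf act Wx h x v (h + Bf h x)) v else 0)"

lemma meas_bsum:
  fixes act :: "nat \<Rightarrow> 's::finite \<Rightarrow> (nat \<Rightarrow> ('s,'a::finite) realization) \<Rightarrow> nat \<Rightarrow> 's \<Rightarrow> 'a"
  assumes A: "\<forall>h s t x. (\<lambda>L. act h s L t x) \<in> measurable info_space (count_space UNIV)"
  shows "(\<lambda>\<omega>. bsum M W H Bf act Wc n h x \<omega>) \<in> borel_measurable (PiM J (\<lambda>_. real_space))"
proof (induction n arbitrary: h x)
  case 0 then show ?case by simp
next
  case (Suc n)
  have "(\<lambda>\<omega>. (\<lambda>y \<omega>. bsum M W H Bf act Wc n (h + Bf h x) y \<omega>) (state_at Bf act Wc h x \<omega> (h + Bf h x)) \<omega>)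
     \<in> borel_measurable (PiM J (\<lambda>_. real_space))"
    by (rule measurable_compose_countable[OF Suc.IH meas_state[OF A]])
  then show ?case by simp
qed

locale setting = prob_space M for M :: "'w measure" +
  fixes W :: "nat \<Rightarrow> 'w \<Rightarrow> ('s::finite, 'a::finite) realization"
    and H l :: nat
    and Bf :: "nat \<Rightarrow> 's \<Rightarrow> nat"
    and act :: "nat \<Rightarrow> 's \<Rightarrow> (nat \<Rightarrow> ('s,'a) realization) \<Rightarrow> nat \<Rightarrow> 's \<Rightarrow> 'a"
  assumes ind: "indep_vars (\<lambda>_. real_space) W {1..H}"
    and rew: "\<forall>t\<in>{1..H}. \<forall>w\<in>space M. \<forall>p. fst (W t w p) \<in> {0..1}"
    and abp: "ABP M W H l Bf act"
begin

lemma Bfb: "\<forall>h\<in>{1..H}. \<forall>s. 1 \<le> Bf h s \<and> Bf h s \<le> H - h + 1"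
  using abp unfolding ABP_def by auto

lemma actm: "\<forall>h s t x. (\<lambda>L. act h s L t x) \<in> measurable info_space (count_space UNIV)"
  using abp unfolding ABP_def by auto

definition Wr :: "nat set \<Rightarrow> 'w \<Rightarrow> nat \<Rightarrow> ('s,'a) realization" where
  "Wr J w = restrict (\<lambda>t. W t w) J"

lemma Wr_meas: "J \<subseteq> {1..H} \<Longrightarrow> Wr J \<in> measurable M (PiM J (\<lambda>_. real_space))"
  unfolding Wr_def using ind unfolding indep_vars_def
  by (intro measurable_restrict) auto

lemma Wc_Wr: "t \<in> J \<Longrightarrow> Wc t (Wr J w) = W t w"
  unfolding Wc_def Wr_def by simp

lemma fut_reward:
  assumes "1 \<le> m" "m \<le> h0" "h0 \<le> t" "t \<le> H"
  shows "reward_at Bf act W h0 s0 w t = reward_at Bf act Wc h0 s0 (Wr {m..H} w) t"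
proof (rule reward_cong[OF _ assms(3)])
  fix k' assume k': "k' \<le> t - h0"
  obtain x b sb where tr: "traj Bf act W h0 s0 w k' = (x, b, sb)" by (cases "traj Bf act W h0 s0 w k'") auto
  have iv: "h0 \<le> b \<and> b \<le> h0 + k' \<and> h0 + k' < b + Bf b sb \<and> b + Bf b sb \<le> H + 1"
    by (rule traj_inv[OF Bfb _ _ tr]) (use assms k' in auto)
  have "\<forall>i<Bf b sb. W (b + i) w = Wc (b + i) (Wr {m..H} w)"
    using iv assms by (auto intro!: Wc_Wr[symmetric])
  moreover have "W (h0 + k') w = Wc (h0 + k') (Wr {m..H} w)"
    using iv assms k' by (auto intro!: Wc_Wr[symmetric])
  ultimately show "case traj Bf act W h0 s0 w k' of (x, b, sb) \<Rightarrow>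
      (\<forall>i<Bf b sb. W (b + i) w = Wc (b + i) (Wr {m..H} w)) \<and> W (h0 + k') w = Wc (h0 + k') (Wr {m..H} w)"
    using tr by simp
qed

lemma past_cond:
  assumes "h \<in> {1..H}" "{h..<h + Bf h x} \<subseteq> J" "k' < Bf h x"
  shows "case traj Bf act W h x w k' of (y, b, sb) \<Rightarrow>
      (\<forall>i<Bf b sb. W (b + i) w = Wc (b + i) (Wr J w)) \<and> W (h + k') w = Wc (h + k') (Wr J w)"
proof -
  have B1: "1 \<le> Bf h x" using Bfb assms(1) by auto
  obtain y where tr: "traj Bf act W h x w k' = (y, h, x)" using traj_stay[of Bf h x k' act W w] B1 assms(3) by auto
  show ?thesis using tr assms(2,3) by (auto intro!: Wc_Wr[symmetric])
qed

lemma past_traj: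
  assumes "h \<in> {1..H}" "{h..<h + Bf h x} \<subseteq> J" "k \<le> Bf h x"
  shows "traj Bf act W h x w k = traj Bf act Wc h x (Wr J w) k"
  by (rule traj_cong) (use past_cond[OF assms(1,2)] assms(3) in auto)

lemma past_state:
  assumes "h \<in> {1..H}" "{h..<h + Bf h x} \<subseteq> J"
  shows "state_at Bf act W h x w (h + Bf h x) = state_at Bf act Wc h x (Wr J w) (h + Bf h x)"
  unfolding state_at_def using past_traj[OF assms, of "Bf h x"] by simp

lemma past_reward:
  assumes "h \<in> {1..H}" "{h..<h + Bf h x} \<subseteq> J" "h \<le> t" "t < h + Bf h x"
  shows "reward_at Bf act W h x w t = reward_at Bf act Wc h x (Wr J w) t"
  by (rule reward_cong) (use past_cond[OF assms(1,2)] assms(3,4) in auto)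


lemma rew_bd: "t \<in> {1..H} \<Longrightarrow> w \<in> space M \<Longrightarrow> 0 \<le> reward_at Bf act W h0 s0 w t \<and> reward_at Bf act W h0 s0 w t \<le> 1"
  using rew unfolding reward_at_def by fastforce

lemma meas_rewM:
  assumes "1 \<le> h0" "h0 \<le> t" "t \<le> H"
  shows "(\<lambda>w. reward_at Bf act W h0 s0 w t) \<in> borel_measurable M"
proof -
  have "(\<lambda>w. reward_at Bf act Wc h0 s0 (Wr {h0..H} w) t) \<in> borel_measurable M"
    using measurable_compose[OF Wr_meas meas_reward[OF actm]] assms by auto
  then show ?thesis using fut_reward[OF assms(1) order.refl assms(2,3)] by simp
qed

definition Rs :: "nat \<Rightarrow> 's \<Rightarrow> 'w \<Rightarrow> real" where
  "Rs h x w = (\<Sum>t=h..H. reward_at Bf act W h x w t)"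

definition V :: "nat \<Rightarrow> 's \<Rightarrow> real" where
  "V h x = Val M W H Bf act h x"

definition G :: "nat \<Rightarrow> 's \<Rightarrow> 'w \<Rightarrow> real" where
  "G h x w = Rs h x w - V h x"

lemma V_eq: "V h x = (\<integral>w. Rs h x w \<partial>M)"
  unfolding V_def Val_def Rs_def ..

lemma meas_Rs: "1 \<le> h \<Longrightarrow> Rs h x \<in> borel_measurable M"
  unfolding Rs_def[abs_def] by (intro borel_measurable_sum meas_rewM) auto

lemma Rs_bd: "1 \<le> h \<Longrightarrow> w \<in> space M \<Longrightarrow> 0 \<le> Rs h x w \<and> Rs h x w \<le> real H"
proof -
  assume h: "1 \<le> h" and w: "w \<in> space M"
  have "0 \<le> Rs h x w" unfolding Rs_def using rew_bd h w by (intro sum_nonneg) auto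
  moreover have "Rs h x w \<le> real (card {h..H}) * 1" unfolding Rs_def
    using rew_bd h w by (intro sum_bounded_above) auto
  moreover have "card {h..H} \<le> H" using h by simp
  ultimately show ?thesis by (smt (verit) of_nat_le_iff)
qed

lemma int_bd:
  fixes f :: "'w \<Rightarrow> real"
  assumes "\<forall>w\<in>space M. 0 \<le> f w \<and> f w \<le> c"
  shows "0 \<le> (\<integral>w. f w \<partial>M) \<and> (\<integral>w. f w \<partial>M) \<le> c"
proof
  show "0 \<le> (\<integral>w. f w \<partial>M)" using assms by (intro integral_nonneg_AE) auto
  show "(\<integral>w. f w \<partial>M) \<le> c"
  proof (cases "integrable M f")
    case True
    then have "(\<integral>w. f w \<partial>M) \<le> (\<integral>w. c \<partial>M)"
      using assms by (intro integral_mono) auto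
    then show ?thesis by (simp add: prob_space)
  next
    case False
    then show ?thesis using assms not_integrable_integral_eq[OF False] 
      by (metis dual_order.trans ex_in_conv not_empty)
  qed
qed

lemma V_bd: "1 \<le> h \<Longrightarrow> 0 \<le> V h x \<and> V h x \<le> real H"
  unfolding V_eq by (rule int_bd) (use Rs_bd in auto)

lemma integrable_bd:
  fixes f :: "'w \<Rightarrow> real"
  assumes "f \<in> borel_measurable M" "\<forall>w\<in>space M. \<bar>f w\<bar> \<le> c"
  shows "integrable M f"
  by (rule integrable_const_bound[where B=c]) (use assms in auto)

lemma int_Rs: "1 \<le> h \<Longrightarrow> integrable M (Rs h x)"
  by (rule integrable_bd[OF meas_Rs, where c="real H"]) (use Rs_bd in auto)

lemma int_G0: "1 \<le> h \<Longrightarrow> (\<integral>w. G h x w \<partial>M) = 0"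
  unfolding G_def using int_Rs by (simp add: V_eq prob_space)

lemma G_bd: "1 \<le> h \<Longrightarrow> w \<in> space M \<Longrightarrow> \<bar>G h x w\<bar> \<le> real H"
  unfolding G_def using Rs_bd V_bd by (smt (verit))

lemma indep_int:
  fixes f g :: "(nat \<Rightarrow> ('s,'a) realization) \<Rightarrow> real"
  assumes "1 \<le> m" "m \<le> H + 1"
    and f: "f \<in> borel_measurable (PiM {1..<m} (\<lambda>_. real_space))"
    and g: "g \<in> borel_measurable (PiM {m..H} (\<lambda>_. real_space))"
    and "integrable M (\<lambda>w. f (Wr {1..<m} w))" "integrable M (\<lambda>w. g (Wr {m..H} w))"
  shows "(\<integral>w. f (Wr {1..<m} w) * g (Wr {m..H} w) \<partial>M) = (\<integral>w. f (Wr {1..<m} w) \<partial>M) * (\<integral>w. g (Wr {m..H} w) \<partial>M)"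
proof -
  have "indep_var (PiM {1..<m} (\<lambda>_. real_space)) (Wr {1..<m}) (PiM {m..H} (\<lambda>_. real_space)) (Wr {m..H})"
    using indep_var_restrict[OF ind, of "{1..<m}" "{m..H}"] assms(1,2) unfolding Wr_def[abs_def]
    by fastforce
  from indep_var_compose[OF this f g]
  have "indep_var borel (\<lambda>w. f (Wr {1..<m} w)) borel (\<lambda>w. g (Wr {m..H} w))" by (simp add: comp_def)
  then show ?thesis using indep_var_lebesgue_integral assms(5,6) by blast
qed


lemma indep_intg:
  fixes f g :: "(nat \<Rightarrow> ('s,'a) realization) \<Rightarrow> real"
  assumes "1 \<le> m" "m \<le> H + 1"
    and f: "f \<in> borel_measurable (PiM {1..<m} (\<lambda>_. real_space))"
    and g: "g \<in> borel_measurable (PiM {m..H} (\<lambda>_. real_space))"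
    and "integrable M (\<lambda>w. f (Wr {1..<m} w))" "integrable M (\<lambda>w. g (Wr {m..H} w))"
  shows "integrable M (\<lambda>w. f (Wr {1..<m} w) * g (Wr {m..H} w))"
proof -
  have "indep_var (PiM {1..<m} (\<lambda>_. real_space)) (Wr {1..<m}) (PiM {m..H} (\<lambda>_. real_space)) (Wr {m..H})"
    using indep_var_restrict[OF ind, of "{1..<m}" "{m..H}"] assms(1,2) unfolding Wr_def[abs_def]
    by fastforce
  from indep_var_compose[OF this f g]
  have "indep_var borel (\<lambda>w. f (Wr {1..<m} w)) borel (\<lambda>w. g (Wr {m..H} w))" by (simp add: comp_def)
  then show ?thesis using indep_var_integrable assms(5,6) by blast
qed

lemma fut_bsum:
  assumes "1 \<le> m" "m \<le> h"
  shows "bsum M W H Bf act W n h y w = bsum M W H Bf act Wc n h y (Wr {m..H} w)"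
  using assms(2)
proof (induction n arbitrary: h y)
  case 0 then show ?case by simp
next
  case (Suc n)
  show ?case
  proof (cases "h \<le> H")
    case True
    have h: "h \<in> {1..H}" using True Suc.prems assms(1) by auto
    have "Bf h y \<le> H - h + 1" using Bfb h by auto
    then have J: "{h..<h + Bf h y} \<subseteq> {m..H}" using Suc.prems True by auto
    have "state_at Bf act W h y w (h + Bf h y) = state_at Bf act Wc h y (Wr {m..H} w) (h + Bf h y)"
      by (rule past_state[OF h J])
    then show ?thesis using True Suc.IH[of "h + Bf h y"] Suc.prems by simp
  qed simp
qed


lemma step:
  assumes h: "h \<in> {1..H}"
    and IH: "\<And>y. (\<integral>w. (G (h + Bf h x) y w)\<^sup>2 \<partial>M) = (\<integral>w. bsum M W H Bf act W n (h + Bf h x) y w \<partial>M)"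
    and IHi: "\<And>y. integrable M (\<lambda>w. bsum M W H Bf act W n (h + Bf h x) y w)"
  shows "integrable M (\<lambda>w. bsum M W H Bf act W (Suc n) h x w)"
    and "(\<integral>w. (G h x w)\<^sup>2 \<partial>M) = (\<integral>w. bsum M W H Bf act W (Suc n) h x w \<partial>M)"
proof -
  define B where "B = Bf h x"
  define m where "m = h + B"
  have B1: "1 \<le> B" "B \<le> H - h + 1" using Bfb h B_def by auto
  then have m: "1 \<le> m" "m \<le> H + 1" "h < m" using h by (auto simp: m_def)
  define P where "P = {1..<m}"
  define F where "F = {m..H}"
  define Xp where "Xp w = state_at Bf act W h x w m" for w
  define Xp' where "Xp' \<omega> = state_at Bf act Wc h x \<omega> m" for \<omega>
  define Rb where "Rb w = (\<Sum>t\<in>{h..<m}. reward_at Bf act W h x w t)" for w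
  define Rb' where "Rb' \<omega> = (\<Sum>t\<in>{h..<m}. reward_at Bf act Wc h x \<omega> t)" for \<omega>
  define D where "D w = Rb w + V m (Xp w) - V h x" for w
  define D' where "D' \<omega> = Rb' \<omega> + V m (Xp' \<omega>) - V h x" for \<omega>
  define g' where "g' y \<omega> = (\<Sum>t=m..H. reward_at Bf act Wc m y \<omega> t) - V m y" for y \<omega>
  define bs' where "bs' y \<omega> = bsum M W H Bf act Wc n m y \<omega>" for y \<omega>
  have PJ: "{h..<h + Bf h x} \<subseteq> P" using h by (auto simp: P_def m_def B_def)
  have XpE: "Xp w = Xp' (Wr P w)" for w
    unfolding Xp_def Xp'_def m_def B_def using past_state[OF h PJ] .
  have RbE: "Rb w = Rb' (Wr P w)" for w
    unfolding Rb_def Rb'_def by (intro sum.cong refl past_reward[OF h PJ]) (auto simp: m_def B_def)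
  have DE: "D w = D' (Wr P w)" for w unfolding D_def D'_def XpE RbE ..
  have gE: "G m y w = g' y (Wr F w)" for y w
    unfolding G_def Rs_def g'_def F_def using fut_reward[of m m _ y w] m
    by (intro arg_cong2[where f=minus] sum.cong refl) auto
  have bE: "bsum M W H Bf act W n m y w = bs' y (Wr F w)" for y w
    unfolding bs'_def F_def by (rule fut_bsum) (use m in auto)
  have WrP: "Wr P \<in> measurable M (PiM P (\<lambda>_. real_space))" unfolding P_def by (rule Wr_meas) (use m in auto)
  have WrF: "Wr F \<in> measurable M (PiM F (\<lambda>_. real_space))" unfolding F_def by (rule Wr_meas) (use m in auto)
  have mXp': "Xp' \<in> measurable (PiM P (\<lambda>_. real_space)) (count_space UNIV)"
    unfolding Xp'_def[abs_def] by (rule meas_state[OF actm])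
  have mVX': "(\<lambda>\<omega>. V m (Xp' \<omega>)) \<in> borel_measurable (PiM P (\<lambda>_. real_space))"
    by (rule measurable_compose[OF mXp']) simp
  have mRb': "Rb' \<in> borel_measurable (PiM P (\<lambda>_. real_space))"
    unfolding Rb'_def[abs_def] by (intro borel_measurable_sum meas_reward[OF actm])
  have mD': "D' \<in> borel_measurable (PiM P (\<lambda>_. real_space))"
    unfolding D'_def[abs_def] using mRb' mVX' by measurable
  have mg': "g' y \<in> borel_measurable (PiM F (\<lambda>_. real_space))" for y
    unfolding g'_def[abs_def] by (intro borel_measurable_diff borel_measurable_sum meas_reward[OF actm]) auto
  have mbs': "bs' y \<in> borel_measurable (PiM F (\<lambda>_. real_space))" for y
    unfolding bs'_def[abs_def] by (rule meas_bsum[OF actm])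
  have mInd': "(\<lambda>\<omega>. if Xp' \<omega> = y then 1 else 0 :: real) \<in> borel_measurable (PiM P (\<lambda>_. real_space))" for y
    by (rule measurable_compose[OF mXp']) simp
  have mf': "(\<lambda>\<omega>. if Xp' \<omega> = y then D' \<omega> else 0) \<in> borel_measurable (PiM P (\<lambda>_. real_space))" for y
  proof -
    have "(\<lambda>\<omega>. (if Xp' \<omega> = y then 1 else 0) * D' \<omega>) \<in> borel_measurable (PiM P (\<lambda>_. real_space))"
      using mInd' mD' by measurable
    then show ?thesis by (rule measurable_cong[THEN iffD1, rotated]) simp
  qed
  have mXp: "Xp \<in> measurable M (count_space UNIV)"
  proof -
    have "Xp = (\<lambda>w. Xp' (Wr P w))" by (rule ext) (rule XpE)
    then show ?thesis using measurable_compose[OF WrP mXp'] by simp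
  qed
  have mD: "D \<in> borel_measurable M"
  proof -
    have "D = (\<lambda>w. D' (Wr P w))" by (rule ext) (rule DE)
    then show ?thesis using measurable_compose[OF WrP mD'] by simp
  qed
  have mG: "(\<lambda>w. G m y w) \<in> borel_measurable M" for y
    unfolding G_def using meas_Rs[OF m(1)] by measurable
  have mGX: "(\<lambda>w. G m (Xp w) w) \<in> borel_measurable M"
    by (rule measurable_compose_countable[OF mG mXp])
  have Rb_bd: "0 \<le> Rb w \<and> Rb w \<le> real H" if w: "w \<in> space M" for w
  proof -
    have "0 \<le> Rb w" unfolding Rb_def using rew_bd w h m by (intro sum_nonneg) auto
    moreover have "Rb w \<le> real (card {h..<m}) * 1" unfolding Rb_def
      using rew_bd w h m by (intro sum_bounded_above) auto
    moreover have "card {h..<m} \<le> H" using h m by simp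
    ultimately show ?thesis by (smt (verit) of_nat_le_iff)
  qed
  have D_bd: "\<bar>D w\<bar> \<le> 2 * real H" if "w \<in> space M" for w
    unfolding D_def using Rb_bd[OF that] V_bd[OF m(1)] V_bd[of h x] h by (smt (verit) atLeastAtMost_iff)
  have GX_bd: "\<bar>G m (Xp w) w\<bar> \<le> real H" if "w \<in> space M" for w
    using G_bd[OF m(1) that] .
  have traj_m: "traj Bf act W h x w B = (Xp w, h + B, Xp w)" for w
    unfolding Xp_def m_def B_def by (rule traj_end_state) (use B1 B_def in auto)
  have Rs_split: "Rs h x w = Rb w + Rs m (Xp w) w" for w
  proof -
    have "Rs h x w = (\<Sum>t\<in>{h..<Suc H}. reward_at Bf act W h x w t)"
      unfolding Rs_def by (simp add: atLeastLessThanSuc_atLeastAtMost)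
    also have "\<dots> = Rb w + (\<Sum>t\<in>{m..<Suc H}. reward_at Bf act W h x w t)"
      unfolding Rb_def using m by (intro sum.atLeastLessThan_concat[symmetric]) auto
    also have "(\<Sum>t\<in>{m..<Suc H}. reward_at Bf act W h x w t) = Rs m (Xp w) w"
      unfolding Rs_def atLeastLessThanSuc_atLeastAtMost
      using reward_shift[OF traj_m] by (intro sum.cong refl) (auto simp: m_def)
    finally show ?thesis .
  qed
  have Gdec: "G h x w = D w + G m (Xp w) w" for w
    unfolding G_def D_def Rs_split by simp
  have BV: "BVar M W H Bf act h x = (\<integral>w. (D w)\<^sup>2 \<partial>M)"
  proof -
    have "{h..h + B - 1} = {h..<m}" using B1 by (auto simp: m_def)
    then show ?thesis unfolding BVar_def Let_def D_def Rb_def Xp_def V_def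
      by (simp add: B_def m_def)
  qed
  let ?GX = "\<lambda>w. G m (Xp w) w"
  have iD2: "integrable M (\<lambda>w. (D w)\<^sup>2)"
  proof (rule integrable_bd[where c="(2 * real H)\<^sup>2"])
    show "(\<lambda>w. (D w)\<^sup>2) \<in> borel_measurable M" using mD by measurable
    show "\<forall>w\<in>space M. \<bar>(D w)\<^sup>2\<bar> \<le> (2 * real H)\<^sup>2"
    proof
      fix w assume w: "w \<in> space M"
      have "\<bar>D w\<bar> \<le> \<bar>2 * real H\<bar>" using D_bd[OF w] by simp
      then have "(D w)\<^sup>2 \<le> (2 * real H)\<^sup>2" by (simp only: abs_le_square_iff)
      then show "\<bar>(D w)\<^sup>2\<bar> \<le> (2 * real H)\<^sup>2" by simp
    qed
  qed
  have iDG: "integrable M (\<lambda>w. D w * ?GX w)"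
  proof (rule integrable_bd[where c="2 * real H * real H"])
    show "(\<lambda>w. D w * ?GX w) \<in> borel_measurable M" using mD mGX by measurable
    show "\<forall>w\<in>space M. \<bar>D w * ?GX w\<bar> \<le> 2 * real H * real H"
      using D_bd GX_bd by (auto simp: abs_mult intro!: mult_mono)
  qed
  have iG2: "integrable M (\<lambda>w. (?GX w)\<^sup>2)"
  proof (rule integrable_bd[where c="(real H)\<^sup>2"])
    show "(\<lambda>w. (?GX w)\<^sup>2) \<in> borel_measurable M" using mGX by measurable
    show "\<forall>w\<in>space M. \<bar>(?GX w)\<^sup>2\<bar> \<le> (real H)\<^sup>2"
    proof
      fix w assume w: "w \<in> space M"
      have "\<bar>?GX w\<bar> \<le> \<bar>real H\<bar>" using GX_bd[OF w] by simp
      then have "(?GX w)\<^sup>2 \<le> (real H)\<^sup>2" by (simp only: abs_le_square_iff)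
      then show "\<bar>(?GX w)\<^sup>2\<bar> \<le> (real H)\<^sup>2" by simp
    qed
  qed
  have e1: "(\<integral>w. (G h x w)\<^sup>2 \<partial>M) = (\<integral>w. (D w)\<^sup>2 \<partial>M) + 2 * (\<integral>w. D w * ?GX w \<partial>M) + (\<integral>w. (?GX w)\<^sup>2 \<partial>M)"
  proof -
    have "(\<lambda>w. (G h x w)\<^sup>2) = (\<lambda>w. (D w)\<^sup>2 + 2 * (D w * ?GX w) + (?GX w)\<^sup>2)"
      by (rule ext) (simp add: Gdec power2_eq_square algebra_simps)
    then show ?thesis using iD2 iDG iG2 by simp
  qed
  have if': "integrable M (\<lambda>w. (if Xp' (Wr P w) = y then D' (Wr P w) else 0))" for y
  proof (rule integrable_bd[where c="2 * real H"])
    show "(\<lambda>w. (if Xp' (Wr P w) = y then D' (Wr P w) else 0)) \<in> borel_measurable M"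
      using measurable_compose[OF WrP mf'] by simp
    show "\<forall>w\<in>space M. \<bar>if Xp' (Wr P w) = y then D' (Wr P w) else 0\<bar> \<le> 2 * real H"
      using D_bd by (auto simp: DE[symmetric])
  qed
  have iInd: "integrable M (\<lambda>w. (if Xp' (Wr P w) = y then 1 else 0 :: real))" for y
  proof (rule integrable_bd[where c=1])
    show "(\<lambda>w. (if Xp' (Wr P w) = y then 1 else 0 :: real)) \<in> borel_measurable M"
      using measurable_compose[OF WrP mInd'] by simp
  qed auto
  have ig: "integrable M (\<lambda>w. g' y (Wr F w))" for y
  proof -
    have "integrable M (\<lambda>w. G m y w)" unfolding G_def using int_Rs[OF m(1)] by simp
    then show ?thesis by (simp add: gE)
  qed
  have ig2: "integrable M (\<lambda>w. (g' y (Wr F w))\<^sup>2)" for y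
  proof (rule integrable_bd[where c="(real H)\<^sup>2"])
    show "(\<lambda>w. (g' y (Wr F w))\<^sup>2) \<in> borel_measurable M"
      using measurable_compose[OF WrF mg'] by measurable
    show "\<forall>w\<in>space M. \<bar>(g' y (Wr F w))\<^sup>2\<bar> \<le> (real H)\<^sup>2"
    proof
      fix w assume w: "w \<in> space M"
      have "\<bar>G m y w\<bar> \<le> \<bar>real H\<bar>" using G_bd[OF m(1) w] by simp
      then have "(G m y w)\<^sup>2 \<le> (real H)\<^sup>2" by (simp only: abs_le_square_iff)
      then show "\<bar>(g' y (Wr F w))\<^sup>2\<bar> \<le> (real H)\<^sup>2" by (simp add: gE)
    qed
  qed
  have ibs: "integrable M (\<lambda>w. bs' y (Wr F w))" for y
  proof -
    have "(\<lambda>w. bs' y (Wr F w)) = bsum M W H Bf act W n m y" by (rule ext) (simp add: bE)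
    then show ?thesis using IHi[of y] by (simp add: m_def B_def)
  qed
  have mg2: "(\<lambda>\<omega>. (g' y \<omega>)\<^sup>2) \<in> borel_measurable (PiM F (\<lambda>_. real_space))" for y
    using mg' by measurable
  have sumD: "D w * ?GX w = (\<Sum>y\<in>UNIV. (if Xp' (Wr P w) = y then D' (Wr P w) else 0) * g' y (Wr F w))" for w
  proof -
    have "(\<Sum>y\<in>UNIV. (if Xp' (Wr P w) = y then D' (Wr P w) else 0) * g' y (Wr F w))
        = (\<Sum>y\<in>UNIV. if Xp w = y then D w * G m y w else 0)"
      by (intro sum.cong refl) (simp add: XpE DE gE)
    also have "\<dots> = D w * ?GX w" by simp
    finally show ?thesis ..
  qed
  have ifg: "integrable M (\<lambda>w. (if Xp' (Wr P w) = y then D' (Wr P w) else 0) * g' y (Wr F w))" for y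
    by (rule indep_intg[where m=m, folded P_def F_def]) (use m mf' mg' if' ig in auto)
  have cross: "(\<integral>w. D w * ?GX w \<partial>M) = 0"
  proof -
    have "(\<integral>w. D w * ?GX w \<partial>M) = (\<Sum>y\<in>UNIV. (\<integral>w. (if Xp' (Wr P w) = y then D' (Wr P w) else 0) * g' y (Wr F w) \<partial>M))"
      unfolding sumD by (rule Bochner_Integration.integral_sum, rule ifg)
    also have "\<dots> = (\<Sum>y\<in>UNIV. (\<integral>w. (if Xp' (Wr P w) = y then D' (Wr P w) else 0) \<partial>M) * (\<integral>w. g' y (Wr F w) \<partial>M))"
      by (intro sum.cong refl indep_int[where m=m, folded P_def F_def] mf' mg' if' ig) (use m in auto)
    also have "\<dots> = 0"
    proof -
      have "(\<integral>w. g' y (Wr F w) \<partial>M) = 0" for y using int_G0[OF m(1), of y] by (simp add: gE)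
      then show ?thesis by simp
    qed
    finally show ?thesis .
  qed
  have sumG: "(?GX w)\<^sup>2 = (\<Sum>y\<in>UNIV. (if Xp' (Wr P w) = y then 1 else 0) * (g' y (Wr F w))\<^sup>2)" for w
  proof -
    have "(\<Sum>y\<in>UNIV. (if Xp' (Wr P w) = y then 1 else 0) * (g' y (Wr F w))\<^sup>2)
        = (\<Sum>y\<in>UNIV. if Xp w = y then (G m y w)\<^sup>2 else 0)"
      by (intro sum.cong refl) (simp add: XpE gE)
    also have "\<dots> = (?GX w)\<^sup>2" by simp
    finally show ?thesis ..
  qed
  have sumB: "bsum M W H Bf act W n m (Xp w) w = (\<Sum>y\<in>UNIV. (if Xp' (Wr P w) = y then 1 else 0) * bs' y (Wr F w))" for w
  proof -
    have "(\<Sum>y\<in>UNIV. (if Xp' (Wr P w) = y then 1 else 0) * bs' y (Wr F w))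
        = (\<Sum>y\<in>UNIV. if Xp w = y then bsum M W H Bf act W n m y w else 0)"
      by (intro sum.cong refl) (simp add: XpE bE)
    also have "\<dots> = bsum M W H Bf act W n m (Xp w) w" by simp
    finally show ?thesis ..
  qed
  have iIb: "integrable M (\<lambda>w. (if Xp' (Wr P w) = y then 1 else 0) * bs' y (Wr F w))" for y
    by (rule indep_intg[where m=m, folded P_def F_def]) (use m mInd' mbs' iInd ibs in auto)
  have iIg: "integrable M (\<lambda>w. (if Xp' (Wr P w) = y then 1 else 0) * (g' y (Wr F w))\<^sup>2)" for y
    by (rule indep_intg[where m=m, folded P_def F_def]) (use m mInd' mg2 iInd ig2 in auto)
  have iB: "integrable M (\<lambda>w. bsum M W H Bf act W n m (Xp w) w)"
    unfolding sumB by (rule Bochner_Integration.integrable_sum, rule iIb)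
  have sq: "(\<integral>w. (?GX w)\<^sup>2 \<partial>M) = (\<integral>w. bsum M W H Bf act W n m (Xp w) w \<partial>M)"
  proof -
    have "(\<integral>w. (?GX w)\<^sup>2 \<partial>M) = (\<Sum>y\<in>UNIV. (\<integral>w. (if Xp' (Wr P w) = y then 1 else 0) * (g' y (Wr F w))\<^sup>2 \<partial>M))"
      unfolding sumG by (rule Bochner_Integration.integral_sum, rule iIg)
    also have "\<dots> = (\<Sum>y\<in>UNIV. (\<integral>w. (if Xp' (Wr P w) = y then 1 else 0) \<partial>M) * (\<integral>w. (g' y (Wr F w))\<^sup>2 \<partial>M))"
      by (intro sum.cong refl indep_int[where m=m, folded P_def F_def] mInd' mg2 iInd ig2) (use m in auto)
    also have "\<dots> = (\<Sum>y\<in>UNIV. (\<integral>w. (if Xp' (Wr P w) = y then 1 else 0) \<partial>M) * (\<integral>w. bs' y (Wr F w) \<partial>M))"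
    proof (intro sum.cong refl arg_cong2[where f=times])
      fix y
      show "(\<integral>w. (g' y (Wr F w))\<^sup>2 \<partial>M) = (\<integral>w. bs' y (Wr F w) \<partial>M)"
      proof -
        have "(\<lambda>w. (g' y (Wr F w))\<^sup>2) = (\<lambda>w. (G m y w)\<^sup>2)" by (rule ext) (simp add: gE)
        moreover have "(\<lambda>w. bs' y (Wr F w)) = bsum M W H Bf act W n m y" by (rule ext) (simp add: bE)
        ultimately show ?thesis using IH[of y] by (simp add: m_def B_def)
      qed
    qed
    also have "\<dots> = (\<Sum>y\<in>UNIV. (\<integral>w. (if Xp' (Wr P w) = y then 1 else 0) * bs' y (Wr F w) \<partial>M))"
      by (intro sum.cong refl indep_int[where m=m, folded P_def F_def, symmetric] mInd' mbs' iInd ibs) (use m in auto)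
    also have "\<dots> = (\<integral>w. bsum M W H Bf act W n m (Xp w) w \<partial>M)"
      unfolding sumB by (rule Bochner_Integration.integral_sum[symmetric], rule iIb)
    finally show ?thesis .
  qed
  have bS: "bsum M W H Bf act W (Suc n) h x w = BVar M W H Bf act h x + bsum M W H Bf act W n m (Xp w) w" for w
    using h by (simp add: m_def B_def Xp_def)
  show "integrable M (\<lambda>w. bsum M W H Bf act W (Suc n) h x w)"
    unfolding bS using iB by simp
  show "(\<integral>w. (G h x w)\<^sup>2 \<partial>M) = (\<integral>w. bsum M W H Bf act W (Suc n) h x w \<partial>M)"
    unfolding bS e1 cross sq BV[symmetric] using iB by (simp add: prob_space)
qed


lemma G_end: "G (Suc H) x w = 0"
  unfolding G_def V_eq Rs_def by simp

lemma main_ind: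
  "1 \<le> h \<Longrightarrow> h \<le> H + 1 \<Longrightarrow> H + 1 - h \<le> n \<Longrightarrow>
    integrable M (bsum M W H Bf act W n h x) \<and> (\<integral>w. (G h x w)\<^sup>2 \<partial>M) = (\<integral>w. bsum M W H Bf act W n h x w \<partial>M)"
proof (induction n arbitrary: h x)
  case 0
  then have "h = Suc H" by simp
  then show ?case by (simp add: G_end)
next
  case (Suc n)
  show ?case
  proof (cases "h \<le> H")
    case True
    have h: "h \<in> {1..H}" using True Suc.prems by auto
    have "1 \<le> Bf h x \<and> Bf h x \<le> H - h + 1" using Bfb h by auto
    then have IH: "integrable M (bsum M W H Bf act W n (h + Bf h x) y) \<and>
        (\<integral>w. (G (h + Bf h x) y w)\<^sup>2 \<partial>M) = (\<integral>w. bsum M W H Bf act W n (h + Bf h x) y w \<partial>M)" for y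
      using Suc.IH[of "h + Bf h x" y] Suc.prems True by auto
    show ?thesis using step[OF h, of x n] IH by auto
  next
    case False
    then have "h = Suc H" using Suc.prems by simp
    then show ?thesis by (simp add: G_end)
  qed
qed

definition cb :: "'s \<Rightarrow> 'w \<Rightarrow> nat \<Rightarrow> nat" where
  "cb s w i = tb H Bf act W s w (Suc i)"

lemma cb_Suc: "cb s w (Suc i) = (if cb s w i \<le> H then cb s w i + Bf (cb s w i) (state_at Bf act W 1 s w (cb s w i)) else H + 1)"
  unfolding cb_def by (simp add: Let_def)

lemma cb_props:
  "1 \<le> cb s w i \<and> cb s w i \<le> H + 1 \<and> (cb s w i \<le> H \<longrightarrow>
     traj Bf act W 1 s w (cb s w i - 1) = (state_at Bf act W 1 s w (cb s w i), cb s w i, state_at Bf act W 1 s w (cb s w i)))"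
proof (induction i)
  case 0
  then show ?case by (simp add: cb_def state_at_def)
next
  case (Suc i)
  show ?case
  proof (cases "cb s w i \<le> H")
    case True
    define c where "c = cb s w i"
    define y where "y = state_at Bf act W 1 s w c"
    have c: "1 \<le> c" "c \<le> H" using Suc.IH True by (auto simp: c_def)
    have B: "1 \<le> Bf c y \<and> Bf c y \<le> H - c + 1" using Bfb c by auto
    have tr: "traj Bf act W 1 s w (c - 1) = (y, 1 + (c - 1), y)" using Suc.IH True c by (simp add: c_def y_def)
    have cs: "cb s w (Suc i) = c + Bf c y" using cb_Suc[of s w i] True by (simp add: c_def y_def)
    have "traj Bf act W 1 s w (c - 1 + Bf c y) = traj Bf act W c y w (Bf c y)"
      using traj_shift[OF tr, of "Bf c y"] c by simp
    also have "\<dots> = (state_at Bf act W c y w (c + Bf c y), c + Bf c y, state_at Bf act W c y w (c + Bf c y))"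
      by (rule traj_end_state) (use B in auto)
    finally have t2: "traj Bf act W 1 s w (c - 1 + Bf c y) = (state_at Bf act W c y w (c + Bf c y), c + Bf c y, state_at Bf act W c y w (c + Bf c y))" .
    have ee: "c + Bf c y - 1 = c - 1 + Bf c y" using c by simp
    have "state_at Bf act W 1 s w (c + Bf c y) = fst (traj Bf act W 1 s w (c - 1 + Bf c y))"
      unfolding state_at_def ee ..
    then have stE: "state_at Bf act W 1 s w (c + Bf c y) = state_at Bf act W c y w (c + Bf c y)"
      using t2 by simp
    have t3: "traj Bf act W 1 s w (c + Bf c y - 1) = (state_at Bf act W 1 s w (c + Bf c y), c + Bf c y, state_at Bf act W 1 s w (c + Bf c y))"
      unfolding ee stE by (rule t2)
    have "c + Bf c y \<le> H + 1" "1 \<le> c + Bf c y" using B c by linarith+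
    then show ?thesis unfolding cs using t3 by blast
  next
    case False
    then show ?thesis using cb_Suc[of s w i] by simp
  qed
qed

lemma cb_big: "H < cb s w i \<Longrightarrow> H < cb s w (i + j)"
  by (induction j) (auto simp: cb_Suc)

definition bterm :: "'s \<Rightarrow> 'w \<Rightarrow> nat \<Rightarrow> real" where
  "bterm s w t = (if t \<le> H then BVar M W H Bf act t (state_at Bf act W 1 s w t) else 0)"

lemma bsum_tb:
  "bsum M W H Bf act W n (cb s w i) (state_at Bf act W 1 s w (cb s w i)) w = (\<Sum>j<n. bterm s w (cb s w (i + j)))"
proof (induction n arbitrary: i)
  case 0 then show ?case by simp
next
  case (Suc n)
  show ?case
  proof (cases "cb s w i \<le> H")
    case True
    define c where "c = cb s w i"
    define y where "y = state_at Bf act W 1 s w c"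
    have c: "1 \<le> c" "c \<le> H" using cb_props[of s w i] True by (auto simp: c_def)
    have tr: "traj Bf act W 1 s w (c - 1) = (y, 1 + (c - 1), y)" using cb_props[of s w i] True c by (simp add: c_def y_def)
    have cs: "cb s w (Suc i) = c + Bf c y" using cb_Suc[of s w i] True by (simp add: c_def y_def)
    have st: "state_at Bf act W c y w (c + Bf c y) = state_at Bf act W 1 s w (cb s w (Suc i))"
      using state_shift[OF tr, of "c + Bf c y"] c cs by simp
    have "bsum M W H Bf act W (Suc n) (cb s w i) (state_at Bf act W 1 s w (cb s w i)) w
        = bterm s w (cb s w i) + (\<Sum>j<n. bterm s w (cb s w (Suc i + j)))"
      using True Suc.IH[of "Suc i"] st cs unfolding bterm_def by (simp add: c_def y_def)
    also have "\<dots> = (\<Sum>j<Suc n. bterm s w (cb s w (i + j)))"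
      by (subst sum.lessThan_Suc_shift) simp
    finally show ?thesis .
  next
    case False
    have "bterm s w (cb s w (i + j)) = 0" for j
      using cb_big[of s w i j] False unfolding bterm_def by simp
    then show ?thesis using False by simp
  qed
qed

lemma final:
  shows "(\<integral>w. (\<Sum>i=1..H. (let t = tb H Bf act W s w i in
              if t \<le> H then BVar M W H Bf act t (state_at Bf act W 1 s w t) else 0)) \<partial>M)
           = (\<integral>w. ((\<Sum>t=1..H. reward_at Bf act W 1 s w t) - Val M W H Bf act 1 s)\<^sup>2 \<partial>M)
       \<and> (\<integral>w. ((\<Sum>t=1..H. reward_at Bf act W 1 s w t) - Val M W H Bf act 1 s)\<^sup>2 \<partial>M)
           \<le> (real H)\<^sup>2"
proof
  have rhs: "(\<lambda>w. ((\<Sum>t=1..H. reward_at Bf act W 1 s w t) - Val M W H Bf act 1 s)\<^sup>2) = (\<lambda>w. (G 1 s w)\<^sup>2)"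
    unfolding G_def Rs_def V_def ..
  have lhs: "(\<Sum>i=1..H. (let t = tb H Bf act W s w i in
              if t \<le> H then BVar M W H Bf act t (state_at Bf act W 1 s w t) else 0))
         = bsum M W H Bf act W H 1 s w" for w
  proof -
    have "(\<Sum>i=1..H. (let t = tb H Bf act W s w i in
              if t \<le> H then BVar M W H Bf act t (state_at Bf act W 1 s w t) else 0))
        = (\<Sum>i=Suc 0..H. bterm s w (tb H Bf act W s w i))"
      unfolding bterm_def Let_def One_nat_def ..
    also have "\<dots> = (\<Sum>j<H. bterm s w (cb s w (0 + j)))"
      unfolding sum.atLeast1_atMost_eq cb_def add_0 ..
    also have "\<dots> = bsum M W H Bf act W H (cb s w 0) (state_at Bf act W 1 s w (cb s w 0)) w"
      by (rule bsum_tb[symmetric])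
    also have "\<dots> = bsum M W H Bf act W H 1 s w"
    proof -
      have "cb s w 0 = 1" unfolding cb_def by simp
      moreover have "state_at Bf act W 1 s w 1 = s" unfolding state_at_def by simp
      ultimately show ?thesis by simp
    qed
    finally show ?thesis .
  qed
  show "(\<integral>w. (\<Sum>i=1..H. (let t = tb H Bf act W s w i in
              if t \<le> H then BVar M W H Bf act t (state_at Bf act W 1 s w t) else 0)) \<partial>M)
           = (\<integral>w. ((\<Sum>t=1..H. reward_at Bf act W 1 s w t) - Val M W H Bf act 1 s)\<^sup>2 \<partial>M)"
  proof -
    have "(\<integral>w. (G 1 s w)\<^sup>2 \<partial>M) = (\<integral>w. bsum M W H Bf act W H 1 s w \<partial>M)"
      using main_ind[of 1 H s] by simp
    then show ?thesis unfolding lhs rhs by (rule sym)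
  qed
  have "(\<integral>w. (G 1 s w)\<^sup>2 \<partial>M) \<le> (real H)\<^sup>2"
  proof -
    have "\<forall>w\<in>space M. 0 \<le> (G 1 s w)\<^sup>2 \<and> (G 1 s w)\<^sup>2 \<le> (real H)\<^sup>2"
    proof
      fix w assume w: "w \<in> space M"
      have "\<bar>G 1 s w\<bar> \<le> \<bar>real H\<bar>" using G_bd[OF _ w, of 1 s] by simp
      then show "0 \<le> (G 1 s w)\<^sup>2 \<and> (G 1 s w)\<^sup>2 \<le> (real H)\<^sup>2" by (simp only: abs_le_square_iff) simp
    qed
    then show ?thesis by (rule int_bd[THEN conjunct2])
  qed
  then show "(\<integral>w. ((\<Sum>t=1..H. reward_at Bf act W 1 s w t) - Val M W H Bf act 1 s)\<^sup>2 \<partial>M) \<le> (real H)\<^sup>2"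
    unfolding rhs .
qed

end

theorem lemma5:
  fixes M :: "'w measure"
    and W :: "nat \<Rightarrow> 'w \<Rightarrow> ('s::finite, 'a::finite) realization"
    and H l :: nat
    and Bf :: "nat \<Rightarrow> 's \<Rightarrow> nat"
    and act :: "nat \<Rightarrow> 's \<Rightarrow> (nat \<Rightarrow> ('s,'a) realization) \<Rightarrow> nat \<Rightarrow> 's \<Rightarrow> 'a"
    and s :: 's
  assumes "prob_space M"
    and "prob_space.indep_vars M (\<lambda>_. real_space) W {1..H}"
    and "\<forall>t\<in>{1..H}. \<forall>w\<in>space M. \<forall>p. fst (W t w p) \<in> {0..1}"
    and "l \<ge> 1"
    and "ABP M W H l Bf act"
  shows "(\<integral>w. (\<Sum>i=1..H. (let t = tb H Bf act W s w i in
              if t \<le> H then BVar M W H Bf act t (state_at Bf act W 1 s w t) else 0)) \<partial>M)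
           = (\<integral>w. ((\<Sum>t=1..H. reward_at Bf act W 1 s w t) - Val M W H Bf act 1 s)\<^sup>2 \<partial>M)
       \<and> (\<integral>w. ((\<Sum>t=1..H. reward_at Bf act W 1 s w t) - Val M W H Bf act 1 s)\<^sup>2 \<partial>M)
           \<le> (real H)\<^sup>2"
proof -
  interpret S: setting M W H l Bf act
    by (intro setting.intro setting_axioms.intro) (use assms in auto)
  show ?thesis by (rule S.final)
qed

end
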